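(* Let $X$ be a real Banach space such that $X^*$ and $X^{**}$ are strictly convex, $X$ has the w-Kadec-Klee property and $X^*$ has the $w^*$-Kadec-Klee property. Let $v\in X\setminus\{0\}$, let $(t_i)_{i\in I}$ be a net of positive reals with $t_i\to0$, and let $(w_i)_{i\in I}\subset X$. If there is a net $(z_i^* )_{i\in I}\subset X^*$ with $z_i^*\in J_{t_i}(w_i)$ for all $i$ and $\|z_i^*-J(v)\|\to0$, then some subnet of $(w_i)_{i\in I}$ converges in norm to $v$.
   Context: For $\varepsilon\ge0$, $J_\varepsilon(w):=\{w^*\in X^*: \tfrac12\|y\|^2+\varepsilon\ge \tfrac12\|w\|^2+\langle w^*,y-w\rangle\ \forall y\in X\}$, and $J=J_0$ is the duality mapping, single-valued since $X^*$ is strictly convex. $X$ has the w-Kadec-Klee property if every net with $x_i\to x$ weakly and $\|x_i\|\to\|x\|$ converges in norm; $X^*$ has the $w^*$-Kadec-Klee property if every net with $x_i^*\to x^*$ weak$^*$ and $\|x_i^*\|\to\|x^*\|$ converges in norm. *)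

theory Defs
  imports "HOL-Analysis.Analysis"
begin

definition strictly_convex_space :: "'b::real_normed_vector itself \<Rightarrow> bool" where
  "strictly_convex_space _ \<longleftrightarrow>
     (\<forall>x y :: 'b. norm x = 1 \<and> norm y = 1 \<and> x \<noteq> y \<longrightarrow> norm ((1/2) *\<^sub>R (x + y)) < 1)"

text \<open>w-Kadec-Klee property, stated for nets; a net is represented by its
  (tail) filter of values in X.\<close>
definition w_Kadec_Klee :: "'a::real_normed_vector itself \<Rightarrow> bool" where
  "w_Kadec_Klee _ \<longleftrightarrow>
     (\<forall>(F :: 'a filter) (x :: 'a).
        (\<forall>f :: 'a \<Rightarrow>\<^sub>L real. ((\<lambda>y. blinfun_apply f y) \<longlongrightarrow> blinfun_apply f x) F)
        \<and> ((\<lambda>y. norm y) \<longlongrightarrow> norm x) F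
        \<longrightarrow> ((\<lambda>y. y) \<longlongrightarrow> x) F)"

definition wstar_Kadec_Klee :: "'a::real_normed_vector itself \<Rightarrow> bool" where
  "wstar_Kadec_Klee _ \<longleftrightarrow>
     (\<forall>(F :: ('a \<Rightarrow>\<^sub>L real) filter) (xs :: 'a \<Rightarrow>\<^sub>L real).
        (\<forall>y :: 'a. ((\<lambda>g. blinfun_apply g y) \<longlongrightarrow> blinfun_apply xs y) F)
        \<and> ((\<lambda>g. norm g) \<longlongrightarrow> norm xs) F
        \<longrightarrow> ((\<lambda>g. g) \<longlongrightarrow> xs) F)"

definition J_eps :: "real \<Rightarrow> 'a::real_normed_vector \<Rightarrow> ('a \<Rightarrow>\<^sub>L real) set" where
  "J_eps \<epsilon> w = {ws. \<forall>y. (1/2) * (norm y)\<^sup>2 + \<epsilon> \<ge> (1/2) * (norm w)\<^sup>2 + blinfun_apply ws (y - w)}"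

definition duality_map :: "'a::real_normed_vector \<Rightarrow> ('a \<Rightarrow>\<^sub>L real)" where
  "duality_map w = (THE ws. ws \<in> J_eps 0 w)"

definition directed :: "'i set \<Rightarrow> ('i \<Rightarrow> 'i \<Rightarrow> bool) \<Rightarrow> bool" where
  "directed I le \<longleftrightarrow> I \<noteq> {} \<and> (\<forall>i\<in>I. le i i)
     \<and> (\<forall>i\<in>I. \<forall>j\<in>I. \<forall>k\<in>I. le i j \<and> le j k \<longrightarrow> le i k)
     \<and> (\<forall>i\<in>I. \<forall>j\<in>I. \<exists>k\<in>I. le i k \<and> le j k)"

definition net_lim :: "'i set \<Rightarrow> ('i \<Rightarrow> 'i \<Rightarrow> bool) \<Rightarrow> ('i \<Rightarrow> 'b::topological_space) \<Rightarrow> 'b \<Rightarrow> bool" where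
  "net_lim I le x l \<longleftrightarrow>
     (\<forall>U. open U \<and> l \<in> U \<longrightarrow> (\<exists>i0\<in>I. \<forall>i\<in>I. le i0 i \<longrightarrow> x i \<in> U))"

text \<open>Subnet in the sense of Willard: \<phi> : K \<rightarrow> I with K directed and \<phi> cofinal.\<close>
definition subnet_map :: "'k set \<Rightarrow> ('k \<Rightarrow> 'k \<Rightarrow> bool) \<Rightarrow> ('k \<Rightarrow> 'i) \<Rightarrow> 'i set \<Rightarrow> ('i \<Rightarrow> 'i \<Rightarrow> bool) \<Rightarrow> bool" where
  "subnet_map K leK \<phi> I le \<longleftrightarrow> directed K leK \<and> \<phi> ` K \<subseteq> I
     \<and> (\<forall>i0\<in>I. \<exists>k0\<in>K. \<forall>k\<in>K. leK k0 k \<longrightarrow> le i0 (\<phi> k))"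

end

theory Submission
  imports Defs "HOL-Analysis.Analysis"
begin


definition sublin :: "('b::real_vector \<Rightarrow> real) \<Rightarrow> bool" where
  "sublin q \<longleftrightarrow> (\<forall>x y. q (x + y) \<le> q x + q y) \<and> (\<forall>c x. 0 \<le> c \<longrightarrow> q (c *\<^sub>R x) = c * q x)"

lemma sublin_0: "sublin q \<Longrightarrow> q 0 = 0"
  unfolding sublin_def by (metis mult_zero_left order_refl scaleR_zero_left)

lemma sublin_neg: "sublin q \<Longrightarrow> 0 \<le> q x + q (- x)"
  using sublin_0[of q] unfolding sublin_def by (metis add.right_inverse)

lemma shift_sublin:
  assumes sq: "sublin m"
  shows "\<exists>r. sublin r \<and> r \<le> m \<and> r (- y) \<le> - m y"
proof -
  have sub: "\<And>x y. m (x + y) \<le> m x + m y" and hom: "\<And>c x. 0 \<le> c \<Longrightarrow> m (c *\<^sub>R x) = c * m x"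
    using sq unfolding sublin_def by auto
  define r where "r x = (INF t\<in>{0::real..}. m (x + t *\<^sub>R y) - t * m y)" for x
  have bdd: "bdd_below ((\<lambda>t. m (x + t *\<^sub>R y) - t * m y) ` {0..})" for x
  proof (rule bdd_belowI2[where m="- m (- x)"])
    fix t :: real assume "t \<in> {0..}"
    then have "m (t *\<^sub>R y) = t * m y" using hom by auto
    moreover have "m (t *\<^sub>R y) \<le> m (x + t *\<^sub>R y) + m (- x)"
      using sub[of "x + t *\<^sub>R y" "- x"] by simp
    ultimately show "- m (- x) \<le> m (x + t *\<^sub>R y) - t * m y" by simp
  qed
  have rlow: "r x \<le> m (x + t *\<^sub>R y) - t * m y" if "0 \<le> t" for x t
    unfolding r_def using that by (intro cINF_lower bdd) auto
  have rgr: "z \<le> r x" if "\<And>t. 0 \<le> t \<Longrightarrow> z \<le> m (x + t *\<^sub>R y) - t * m y" for x z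
    unfolding r_def using that by (intro cINF_greatest) auto
  have rle: "r \<le> m"
  proof (rule le_funI)
    fix x show "r x \<le> m x" using rlow[of 0 x] by simp
  qed
  have "sublin r"
    unfolding sublin_def
  proof (intro conjI allI impI)
    fix x1 x2
    have "r (x1 + x2) \<le> (m (x1 + t1 *\<^sub>R y) - t1 * m y) + (m (x2 + t2 *\<^sub>R y) - t2 * m y)"
      if "0 \<le> t1" "0 \<le> t2" for t1 t2
    proof -
      have "r (x1 + x2) \<le> m ((x1 + x2) + (t1 + t2) *\<^sub>R y) - (t1 + t2) * m y"
        using that by (intro rlow) auto
      also have "(x1 + x2) + (t1 + t2) *\<^sub>R y = (x1 + t1 *\<^sub>R y) + (x2 + t2 *\<^sub>R y)"
        by (simp add: algebra_simps)
      finally show ?thesis using sub[of "x1 + t1 *\<^sub>R y" "x2 + t2 *\<^sub>R y"]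
        by (simp add: algebra_simps)
    qed
    then have "r (x1 + x2) - (m (x2 + t2 *\<^sub>R y) - t2 * m y) \<le> r x1" if "0 \<le> t2" for t2
      using that by (intro rgr) (simp add: algebra_simps)
    then have "r (x1 + x2) - r x1 \<le> r x2"
      by (intro rgr) (simp add: algebra_simps)
    then show "r (x1 + x2) \<le> r x1 + r x2" by simp
  next
    fix c :: real and x assume c: "0 \<le> c"
    show "r (c *\<^sub>R x) = c * r x"
    proof (cases "c = 0")
      case True
      have "r 0 = 0"
      proof (rule antisym)
        show "r 0 \<le> 0" using rlow[of 0 0] sublin_0[OF sq] by simp
        show "0 \<le> r 0" by (rule rgr) (simp add: hom)
      qed
      then show ?thesis using True by simp
    next
      case False
      then have cp: "0 < c" using c by simp
      show ?thesis
      proof (rule antisym)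
        have "r (c *\<^sub>R x) / c \<le> m (x + s *\<^sub>R y) - s * m y" if "0 \<le> s" for s
        proof -
          have "r (c *\<^sub>R x) \<le> m (c *\<^sub>R x + (c * s) *\<^sub>R y) - (c * s) * m y"
            using that cp by (intro rlow) auto
          moreover have "c *\<^sub>R x + (c * s) *\<^sub>R y = c *\<^sub>R (x + s *\<^sub>R y)" by (simp add: algebra_simps)
          moreover have "m (c *\<^sub>R (x + s *\<^sub>R y)) = c * m (x + s *\<^sub>R y)" using hom cp by simp
          ultimately have "r (c *\<^sub>R x) \<le> c * m (x + s *\<^sub>R y) - c * (s * m y)"
            by (metis mult.assoc)
          then have "r (c *\<^sub>R x) \<le> c * (m (x + s *\<^sub>R y) - s * m y)"
            by (simp add: right_diff_distrib)
          then show ?thesis using cp by (simp add: field_simps)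
        qed
        then have "r (c *\<^sub>R x) / c \<le> r x" by (rule rgr)
        then show "r (c *\<^sub>R x) \<le> c * r x" using cp by (simp add: field_simps)
      next
        have "c * r x \<le> m (c *\<^sub>R x + t *\<^sub>R y) - t * m y" if "0 \<le> t" for t
        proof -
          have "r x \<le> m (x + (t / c) *\<^sub>R y) - (t / c) * m y"
            using that cp by (intro rlow) auto
          then have "c * r x \<le> c * (m (x + (t / c) *\<^sub>R y) - (t / c) * m y)"
            using cp by simp
          also have "\<dots> = m (c *\<^sub>R (x + (t / c) *\<^sub>R y)) - t * m y"
            using hom[of c "x + (t / c) *\<^sub>R y"] cp by (simp add: right_diff_distrib)
          also have "c *\<^sub>R (x + (t / c) *\<^sub>R y) = c *\<^sub>R x + t *\<^sub>R y"
            using cp by (simp add: algebra_simps)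
          finally show ?thesis .
        qed
        then show "c * r x \<le> r (c *\<^sub>R x)" by (rule rgr)
      qed
    qed
  qed
  moreover have "r (- y) \<le> - m y" using rlow[of 1 "- y"] sublin_0[OF sq] by simp
  ultimately show ?thesis using rle by blast
qed

lemma minimal_sublin_linear:
  assumes sq: "sublin m" and minimal: "\<And>a. sublin a \<Longrightarrow> a \<le> m \<Longrightarrow> a = m"
  shows "linear m"
proof -
  have sub: "\<And>x y. m (x + y) \<le> m x + m y" and hom: "\<And>c x. 0 \<le> c \<Longrightarrow> m (c *\<^sub>R x) = c * m x"
    using sq unfolding sublin_def by auto
  have neg: "m (- y) = - m y" for y
  proof -
    obtain r where "sublin r" "r \<le> m" "r (- y) \<le> - m y" using shift_sublin[OF sq] by blast
    then have "m (- y) \<le> - m y" using minimal by metis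
    moreover have "0 \<le> m y + m (- y)" by (rule sublin_neg[OF sq])
    ultimately show ?thesis by simp
  qed
  show ?thesis
  proof (rule linearI)
    fix x y
    have "m x \<le> m (x + y) + m (- y)" using sub[of "x + y" "- y"] by simp
    then show "m (x + y) = m x + m y" using sub[of x y] neg[of y] by simp
  next
    fix c :: real and x
    show "m (c *\<^sub>R x) = c *\<^sub>R m x"
    proof (cases "0 \<le> c")
      case True then show ?thesis using hom by simp
    next
      case False
      then have "m (c *\<^sub>R x) = m ((- c) *\<^sub>R (- x))" by simp
      also have "\<dots> = (- c) * m (- x)" using False hom[of "- c" "- x"] by simp
      finally show ?thesis using neg[of x] by simp
    qed
  qed
qed


lemma hahn_banach_sublin:
  fixes p :: "'b::real_vector \<Rightarrow> real"
  assumes sp: "sublin p"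
  shows "\<exists>f. linear f \<and> (\<forall>x. f x \<le> p x)"
proof -
  define S where "S = {q. sublin q \<and> q \<le> p}"
  define r where "r = {(q1, q2). q1 \<in> S \<and> q2 \<in> S \<and> q2 \<le> q1}"
  have pS: "p \<in> S" using sp unfolding S_def by auto
  have Field: "Field r = S"
    unfolding r_def Field_def by auto
  have po: "Partial_order r"
    unfolding Field partial_order_on_def preorder_on_def refl_on_def trans_def antisym_def r_def
    by (auto intro: order_trans simp: Field_def)
  have lowb: "- p (- x) \<le> q x" if "q \<in> S" for q x
  proof -
    have "sublin q" "q \<le> p" using that unfolding S_def by auto
    then show ?thesis using sublin_neg[of q x] le_funD[of q p "- x"] by simp
  qed
  have "\<exists>u\<in>Field r. \<forall>a\<in>C. (a, u) \<in> r" if C: "C \<in> Chains r" for C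
  proof (cases "C = {}")
    case True then show ?thesis using pS Field by auto
  next
    case False
    have CS: "C \<subseteq> S" using C unfolding Chains_def r_def by auto
    have comp: "\<And>a b. a \<in> C \<Longrightarrow> b \<in> C \<Longrightarrow> a \<le> b \<or> b \<le> a"
      using C unfolding Chains_def r_def by auto
    define u where "u x = (INF q\<in>C. q x)" for x
    have bdd: "bdd_below ((\<lambda>q. q x) ` C)" for x
      by (rule bdd_belowI2[where m="- p (- x)"]) (use CS lowb in auto)
    have ulow: "u x \<le> q x" if "q \<in> C" for q x
      unfolding u_def using that by (intro cINF_lower bdd)
    have ugr: "z \<le> u x" if "\<And>q. q \<in> C \<Longrightarrow> z \<le> q x" for x z
      unfolding u_def using that False by (intro cINF_greatest) auto
    have qsub: "q (x + y) \<le> q x + q y" and qhom: "0 \<le> c \<Longrightarrow> q (c *\<^sub>R x) = c * q x"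
      if "q \<in> C" for q x y c
      using that CS unfolding S_def sublin_def by auto
    have "sublin u"
      unfolding sublin_def
    proof (intro conjI allI impI)
      fix x y
      have "u (x + y) \<le> q1 x + q2 y" if "q1 \<in> C" "q2 \<in> C" for q1 q2
      proof (cases "q2 \<le> q1")
        case True
        have "u (x + y) \<le> q2 (x + y)" using ulow that by auto
        also have "\<dots> \<le> q2 x + q2 y" using qsub that by auto
        finally show ?thesis using True le_funD[OF True, of x] by simp
      next
        case False
        then have "q1 \<le> q2" using comp that by auto
        have "u (x + y) \<le> q1 (x + y)" using ulow that by auto
        also have "\<dots> \<le> q1 x + q1 y" using qsub that by auto
        finally show ?thesis using le_funD[OF \<open>q1 \<le> q2\<close>, of y] by simp
      qed
      then have "u (x + y) - q2 y \<le> u x" if "q2 \<in> C" for q2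
        using that by (intro ugr) (simp add: algebra_simps)
      then have "u (x + y) - u x \<le> u y" by (intro ugr) (simp add: algebra_simps)
      then show "u (x + y) \<le> u x + u y" by simp
    next
      fix c :: real and x assume c: "0 \<le> c"
      show "u (c *\<^sub>R x) = c * u x"
      proof (cases "c = 0")
        case True
        obtain q0 where q0: "q0 \<in> C" using False by auto
        have "u 0 = 0"
        proof (rule antisym)
          show "u 0 \<le> 0" using ulow[OF q0, of 0] qhom[OF q0, of 0 0] by simp
          show "0 \<le> u 0" by (rule ugr) (use qhom[of _ 0 0] in force)
        qed
        then show ?thesis using True by simp
      next
        case False
        then have cp: "0 < c" using c by simp
        show ?thesis
        proof (rule antisym)
          have "u (c *\<^sub>R x) / c \<le> q x" if "q \<in> C" for q
            using ulow[OF that, of "c *\<^sub>R x"] qhom[OF that, of c x] cp by (simp add: field_simps)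
          then have "u (c *\<^sub>R x) / c \<le> u x" by (rule ugr)
          then show "u (c *\<^sub>R x) \<le> c * u x" using cp by (simp add: field_simps)
        next
          have "c * u x \<le> q (c *\<^sub>R x)" if "q \<in> C" for q
            using ulow[OF that, of x] qhom[OF that, of c x] cp by simp
          then show "c * u x \<le> u (c *\<^sub>R x)" by (rule ugr)
        qed
      qed
    qed
    moreover obtain q0 where q0: "q0 \<in> C" using False by auto
    moreover have "u \<le> p"
    proof (rule le_funI)
      fix x have "q0 \<le> p" using CS q0 unfolding S_def by auto
      then show "u x \<le> p x" using ulow[OF q0, of x] le_funD[of q0 p x] by linarith
    qed
    ultimately have uS: "u \<in> S" unfolding S_def by auto
    have "\<forall>a\<in>C. (a, u) \<in> r" unfolding r_def using CS uS ulow by (auto intro: le_funI)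
    then show ?thesis using uS Field by auto
  qed
  from Zorns_po_lemma[OF po this] obtain m where
    mS: "m \<in> S" and mmin: "\<And>a. a \<in> S \<Longrightarrow> (m, a) \<in> r \<Longrightarrow> a = m"
    unfolding Field by blast
  have "linear m"
  proof (rule minimal_sublin_linear)
    show "sublin m" using mS unfolding S_def by auto
    fix a assume "sublin a" "a \<le> m"
    moreover have "m \<le> p" using mS unfolding S_def by auto
    ultimately have "a \<in> S" unfolding S_def by auto
    then show "a = m" using mmin mS \<open>a \<le> m\<close> unfolding r_def by auto
  qed
  moreover have "\<forall>x. m x \<le> p x" using mS unfolding S_def by (auto dest: le_funD)
  ultimately show ?thesis by blast
qed




declare scaleR_blinfun.rep_eq[simp] plus_blinfun.rep_eq[simp] uminus_blinfun.rep_eq[simp]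

definition Lsup :: "'i filter \<Rightarrow> ('i \<Rightarrow> real) \<Rightarrow> real" where
  "Lsup G u = Inf {s. eventually (\<lambda>i. u i \<le> s) G}"

lemma Lsup_le:
  assumes "eventually (\<lambda>i. \<bar>u i\<bar> \<le> B) G" "G \<noteq> bot" "eventually (\<lambda>i. u i \<le> s) G"
  shows "Lsup G u \<le> s"
  unfolding Lsup_def
proof (rule cInf_lower)
  show "s \<in> {s. eventually (\<lambda>i. u i \<le> s) G}" using assms by simp
  show "bdd_below {s. eventually (\<lambda>i. u i \<le> s) G}"
  proof (rule bdd_belowI)
    fix x assume "x \<in> {s. eventually (\<lambda>i. u i \<le> s) G}"
    then have "eventually (\<lambda>i. \<bar>u i\<bar> \<le> B \<and> u i \<le> x) G" using assms(1) by (simp add: eventually_conj)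
    then obtain i where "\<bar>u i\<bar> \<le> B \<and> u i \<le> x" using eventually_happens'[OF assms(2)] by blast
    then show "- B \<le> x" by linarith
  qed
qed

lemma Lsup_ge:
  assumes "eventually (\<lambda>i. \<bar>u i\<bar> \<le> B) G" "\<And>s. eventually (\<lambda>i. u i \<le> s) G \<Longrightarrow> z \<le> s"
  shows "z \<le> Lsup G u"
  unfolding Lsup_def
proof (rule cInf_greatest)
  have "eventually (\<lambda>i. u i \<le> B) G" using assms(1) by (rule eventually_mono) simp
  then show "{s. eventually (\<lambda>i. u i \<le> s) G} \<noteq> {}" by blast
qed (use assms in auto)

lemma Lsup_le_lim:
  assumes "eventually (\<lambda>i. \<bar>u i\<bar> \<le> B) G" "G \<noteq> bot"
    "eventually (\<lambda>i. u i \<le> g i) G" "(g \<longlongrightarrow> a) G"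
  shows "Lsup G u \<le> a"
proof (rule field_le_epsilon)
  fix e :: real assume "0 < e"
  then have "eventually (\<lambda>i. g i < a + e) G" using assms(4) by (intro order_tendstoD) auto
  with assms(3) have "eventually (\<lambda>i. u i \<le> a + e) G" by eventually_elim auto
  then show "Lsup G u \<le> a + e" by (rule Lsup_le[OF assms(1,2)])
qed

lemma core:
  fixes w :: "'i \<Rightarrow> 'a::real_normed_vector" and v :: 'a and d g :: "'a \<Rightarrow>\<^sub>L real"
  assumes sc2: "strictly_convex_space TYPE(('a \<Rightarrow>\<^sub>L real) \<Rightarrow>\<^sub>L real)"
    and v0: "v \<noteq> 0" and dv: "blinfun_apply d v = (norm v)\<^sup>2" and dn: "norm d = norm v"
    and Fw: "((\<lambda>i. norm (w i)) \<longlongrightarrow> norm v) F"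
    and Fd: "((\<lambda>i. blinfun_apply d (w i)) \<longlongrightarrow> (norm v)\<^sup>2) F"
    and eps: "0 < \<epsilon>" and freq: "frequently (\<lambda>i. blinfun_apply g (w i) \<ge> blinfun_apply g v + \<epsilon>) F"
  shows False
proof -
  define nv where "nv = norm v"
  have nvp: "0 < nv" using v0 unfolding nv_def by simp
  define A where "A = {i. blinfun_apply g (w i) \<ge> blinfun_apply g v + \<epsilon>}"
  define G where "G = inf F (principal A)"
  have Gbot: "G \<noteq> bot"
    using freq unfolding G_def A_def trivial_limit_def eventually_inf_principal frequently_def by simp
  have GF: "G \<le> F" unfolding G_def by simp
  have Gw: "((\<lambda>i. norm (w i)) \<longlongrightarrow> nv) G" using tendsto_mono[OF GF Fw] unfolding nv_def .
  have Gd: "((\<lambda>i. blinfun_apply d (w i)) \<longlongrightarrow> nv\<^sup>2) G" using tendsto_mono[OF GF Fd] unfolding nv_def .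
  define M where "M = nv + 1"
  have evM: "eventually (\<lambda>i. norm (w i) \<le> M) G"
  proof -
    have "eventually (\<lambda>i. norm (w i) < M) G" using Gw unfolding M_def by (intro order_tendstoD) auto
    then show ?thesis by eventually_elim simp
  qed
  have bnd: "eventually (\<lambda>i. \<bar>blinfun_apply h (w i)\<bar> \<le> norm h * M) G" for h :: "'a \<Rightarrow>\<^sub>L real"
    using evM
  proof eventually_elim
    case (elim i)
    have "\<bar>blinfun_apply h (w i)\<bar> \<le> norm h * norm (w i)" using norm_blinfun[of h "w i"] by simp
    also have "\<dots> \<le> norm h * M" using elim by (intro mult_left_mono) auto
    finally show ?case .
  qed
  define p where "p h = Lsup G (\<lambda>i. blinfun_apply h (w i))" for h :: "'a \<Rightarrow>\<^sub>L real"
  have ple: "p h \<le> s" if "eventually (\<lambda>i. blinfun_apply h (w i) \<le> s) G" for h s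
    unfolding p_def by (rule Lsup_le[OF bnd Gbot that])
  have pge: "z \<le> p h" if "\<And>s. eventually (\<lambda>i. blinfun_apply h (w i) \<le> s) G \<Longrightarrow> z \<le> s" for h z
    unfolding p_def by (rule Lsup_ge[OF bnd that])
  have "sublin p"
    unfolding sublin_def
  proof (intro conjI allI impI)
    fix a b :: "'a \<Rightarrow>\<^sub>L real"
    have "p (a + b) \<le> s1 + s2" if "eventually (\<lambda>i. blinfun_apply a (w i) \<le> s1) G"
      "eventually (\<lambda>i. blinfun_apply b (w i) \<le> s2) G" for s1 s2
    proof (rule ple)
      from that show "eventually (\<lambda>i. blinfun_apply (a + b) (w i) \<le> s1 + s2) G"
        by eventually_elim (simp add: blinfun.add_left)
    qed
    then have "p (a + b) - s2 \<le> p a" if "eventually (\<lambda>i. blinfun_apply b (w i) \<le> s2) G" for s2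
      using that by (intro pge) (simp add: algebra_simps)
    then have "p (a + b) - p a \<le> p b" by (intro pge) (simp add: algebra_simps)
    then show "p (a + b) \<le> p a + p b" by simp
  next
    fix c :: real and h :: "'a \<Rightarrow>\<^sub>L real" assume c: "0 \<le> c"
    show "p (c *\<^sub>R h) = c * p h"
    proof (cases "c = 0")
      case True
      have "p 0 = 0"
      proof (rule antisym)
        show "p 0 \<le> 0" by (rule ple) simp
        show "0 \<le> p 0"
        proof (rule pge)
          fix s assume "eventually (\<lambda>i. blinfun_apply 0 (w i) \<le> s) G"
          then show "0 \<le> s" using eventually_happens'[OF Gbot] by auto
        qed
      qed
      then show ?thesis using True by simp
    next
      case False
      then have cp: "0 < c" using c by simp
      show ?thesis
      proof (rule antisym)
        have "p (c *\<^sub>R h) / c \<le> s" if "eventually (\<lambda>i. blinfun_apply h (w i) \<le> s) G" for s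
        proof -
          have "eventually (\<lambda>i. blinfun_apply (c *\<^sub>R h) (w i) \<le> c * s) G"
            using that by eventually_elim (use cp in \<open>simp add: mult_left_mono\<close>)
          then have "p (c *\<^sub>R h) \<le> c * s" by (rule ple)
          then show ?thesis using cp by (simp add: field_simps)
        qed
        then have "p (c *\<^sub>R h) / c \<le> p h" by (rule pge)
        then show "p (c *\<^sub>R h) \<le> c * p h" using cp by (simp add: field_simps)
      next
        have "p h \<le> s / c" if "eventually (\<lambda>i. blinfun_apply (c *\<^sub>R h) (w i) \<le> s) G" for s
        proof (rule ple)
          show "eventually (\<lambda>i. blinfun_apply h (w i) \<le> s / c) G"
            using that by eventually_elim (use cp in \<open>simp add: field_simps\<close>)
        qed
        then have "c * p h \<le> s" if "eventually (\<lambda>i. blinfun_apply (c *\<^sub>R h) (w i) \<le> s) G" for s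
          using that cp by (simp add: field_simps)
        then show "c * p h \<le> p (c *\<^sub>R h)" by (rule pge)
      qed
    qed
  qed
  then obtain \<Phi> where lin: "linear \<Phi>" and \<Phi>p: "\<And>h. \<Phi> h \<le> p h"
    using hahn_banach_sublin by blast
  have pnorm: "p h \<le> norm h * nv" for h
    unfolding p_def
  proof (rule Lsup_le_lim[OF bnd Gbot])
    show "eventually (\<lambda>i. blinfun_apply h (w i) \<le> norm h * norm (w i)) G"
      using norm_blinfun[of h] by (intro always_eventually) (metis abs_le_D1 real_norm_def)
    show "((\<lambda>i. norm h * norm (w i)) \<longlongrightarrow> norm h * nv) G" by (intro tendsto_intros Gw)
  qed
  have \<Phi>neg: "\<Phi> (- h) = - \<Phi> h" for h using lin by (simp add: linear_neg)
  have \<Phi>b: "\<bar>\<Phi> h\<bar> \<le> norm h * nv" for h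
    using \<Phi>p[of h] pnorm[of h] \<Phi>p[of "- h"] pnorm[of "- h"] \<Phi>neg[of h] by auto
  have bl: "bounded_linear \<Phi>"
    using lin \<Phi>b by (intro bounded_linear_intro[where K=nv]) (auto simp: linear_add linear_scale)
  define \<Psi> where "\<Psi> = Blinfun \<Phi>"
  have \<Psi>a: "blinfun_apply \<Psi> = \<Phi>" unfolding \<Psi>_def using bl by (rule bounded_linear_Blinfun_apply)
  have blV: "bounded_linear (\<lambda>h :: 'a \<Rightarrow>\<^sub>L real. blinfun_apply h v)"
    by (rule bounded_bilinear.bounded_linear_left[OF bounded_bilinear_blinfun_apply])
  define V where "V = Blinfun (\<lambda>h :: 'a \<Rightarrow>\<^sub>L real. blinfun_apply h v)"
  have Va: "blinfun_apply V h = blinfun_apply h v" for h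
    unfolding V_def using blV by (simp add: bounded_linear_Blinfun_apply)
  have \<Phi>d: "nv\<^sup>2 \<le> \<Phi> d"
  proof -
    have "p (- d) \<le> - nv\<^sup>2"
      unfolding p_def
    proof (rule Lsup_le_lim[OF bnd Gbot])
      show "eventually (\<lambda>i. blinfun_apply (- d) (w i) \<le> - blinfun_apply d (w i)) G" by simp
      show "((\<lambda>i. - blinfun_apply d (w i)) \<longlongrightarrow> - nv\<^sup>2) G" by (intro tendsto_intros Gd)
    qed
    then show ?thesis using \<Phi>p[of "- d"] \<Phi>neg[of d] by simp
  qed
  have \<Phi>g: "blinfun_apply g v + \<epsilon> \<le> \<Phi> g"
  proof -
    have "p (- g) \<le> - (blinfun_apply g v + \<epsilon>)"
    proof (rule ple)
      show "eventually (\<lambda>i. blinfun_apply (- g) (w i) \<le> - (blinfun_apply g v + \<epsilon>)) G"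
        unfolding G_def eventually_inf_principal A_def by simp
    qed
    then show ?thesis using \<Phi>p[of "- g"] \<Phi>neg[of g] by simp
  qed
  have dnv: "norm d = nv" using dn unfolding nv_def .
  have n\<Psi>: "norm \<Psi> = nv"
  proof (rule antisym)
    show "norm \<Psi> \<le> nv" using \<Phi>b nvp by (intro norm_blinfun_bound) (auto simp: \<Psi>a mult.commute)
    have "nv\<^sup>2 \<le> norm \<Psi> * nv" using \<Phi>d norm_blinfun[of \<Psi> d] dnv \<Psi>a by simp
    then show "nv \<le> norm \<Psi>" using nvp by (simp add: power2_eq_square)
  qed
  have nV: "norm V = nv"
  proof (rule antisym)
    show "norm V \<le> nv" using nvp
    proof (intro norm_blinfun_bound)
      fix h :: "'a \<Rightarrow>\<^sub>L real"
      show "norm (blinfun_apply V h) \<le> nv * norm h"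
        using norm_blinfun[of h v] unfolding Va nv_def by (simp add: mult.commute)
    qed simp
    have "nv\<^sup>2 \<le> norm V * nv" using dv norm_blinfun[of V d] dnv Va nv_def by simp
    then show "nv \<le> norm V" using nvp by (simp add: power2_eq_square)
  qed
  define a where "a = (1 / nv) *\<^sub>R \<Psi>"
  define b where "b = (1 / nv) *\<^sub>R V"
  have na: "norm a = 1" unfolding a_def using n\<Psi> nvp by simp
  have nb: "norm b = 1" unfolding b_def using nV nvp by simp
  have ab: "a \<noteq> b"
  proof
    assume "a = b"
    then have "blinfun_apply a g = blinfun_apply b g" by simp
    then have "\<Phi> g / nv = blinfun_apply g v / nv" unfolding a_def b_def by (simp add: \<Psi>a Va)
    then have "\<Phi> g = blinfun_apply g v" using nvp by (simp add: field_simps)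
    then show False using \<Phi>g eps by simp
  qed
  have lt: "norm ((1/2) *\<^sub>R (a + b)) < 1"
    using sc2 na nb ab unfolding strictly_convex_space_def by blast
  have "nv \<le> blinfun_apply ((1/2) *\<^sub>R (a + b)) d"
  proof -
    have "blinfun_apply ((1/2) *\<^sub>R (a + b)) d = (\<Phi> d + nv\<^sup>2) / (2 * nv)"
      unfolding a_def b_def using dv nvp by (simp add: \<Psi>a Va nv_def blinfun.add_left field_simps)
    also have "nv \<le> (\<Phi> d + nv\<^sup>2) / (2 * nv)" using \<Phi>d nvp by (simp add: field_simps power2_eq_square)
    finally show ?thesis by simp
  qed
  also have "\<dots> \<le> norm ((1/2) *\<^sub>R (a + b)) * nv"
    using norm_blinfun[of "(1/2) *\<^sub>R (a + b)" d] dnv by simp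
  also have "\<dots> < nv" using lt nvp by simp
  finally show False by simp
qed




lemma eventually_tail:
  assumes "directed I le"
  shows "eventually P (INF i0\<in>I. principal {i\<in>I. le i0 i}) \<longleftrightarrow> (\<exists>i0\<in>I. \<forall>i\<in>I. le i0 i \<longrightarrow> P i)"
proof -
  have "eventually P (INF i0\<in>I. principal {i\<in>I. le i0 i}) \<longleftrightarrow> (\<exists>i0\<in>I. eventually P (principal {i\<in>I. le i0 i}))"
  proof (rule eventually_INF_base)
    show "I \<noteq> {}" using assms unfolding directed_def by auto
    fix a b assume ab: "a \<in> I" "b \<in> I"
    then obtain k where k: "k \<in> I" "le a k" "le b k" using assms unfolding directed_def by blast
    have "{i\<in>I. le k i} \<subseteq> {i\<in>I. le a i} \<inter> {i\<in>I. le b i}"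
      using assms k ab unfolding directed_def by blast
    then show "\<exists>x\<in>I. principal {i\<in>I. le x i} \<le> inf (principal {i\<in>I. le a i}) (principal {i\<in>I. le b i})"
      using k by (intro bexI[of _ k]) auto
  qed
  then show ?thesis by (auto simp: eventually_principal)
qed

lemma net_lim_tail:
  assumes "directed I le"
  shows "net_lim I le x l \<longleftrightarrow> (x \<longlongrightarrow> l) (INF i0\<in>I. principal {i\<in>I. le i0 i})"
  unfolding net_lim_def tendsto_def eventually_tail[OF assms] by blast

lemma J0_props:
  fixes v :: "'a::real_normed_vector" and ws :: "'a \<Rightarrow>\<^sub>L real"
  assumes J: "ws \<in> J_eps 0 v" and v0: "v \<noteq> 0"
  shows "blinfun_apply ws v = (norm v)\<^sup>2" "\<And>y. \<bar>blinfun_apply ws y\<bar> \<le> norm v * norm y"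
    "norm ws = norm v"
proof -
  have H: "(1/2) * (norm v)\<^sup>2 + blinfun_apply ws (y - v) \<le> (1/2) * (norm y)\<^sup>2" for y
    using J unfolding J_eps_def by auto
  define N where "N = (norm v)\<^sup>2"
  define a where "a = blinfun_apply ws v"
  have Np: "0 < N" using v0 unfolding N_def by simp
  define s where "s = a / N"
  have n2: "(norm (s *\<^sub>R v))\<^sup>2 = s * s * N" unfolding N_def
    by (simp add: power_mult_distrib power2_eq_square)
  have wsd: "blinfun_apply ws (s *\<^sub>R v - v) = s * a - a"
    unfolding a_def by (simp add: blinfun.diff_right blinfun.scaleR_right)
  have "(1/2) * N + (s * a - a) \<le> (1/2) * (s * s * N)"
    using H[of "s *\<^sub>R v"] unfolding n2 wsd N_def by simp
  then have "(1/2) * N + (a * a / N - a) \<le> (1/2) * (a * a / N)"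
    unfolding s_def using Np by (simp add: field_simps)
  moreover have "(a - N)\<^sup>2 / (2 * N) = (1/2) * N + (a * a / N - a) - (1/2) * (a * a / N)"
    using Np by (simp add: field_simps power2_eq_square)
  ultimately have q: "(a - N)\<^sup>2 / (2 * N) \<le> 0" by linarith
  have "(a - N)\<^sup>2 \<le> 0"
  proof (rule ccontr)
    assume "\<not> (a - N)\<^sup>2 \<le> 0"
    then have "0 < (a - N)\<^sup>2 / (2 * N)" using Np by (intro divide_pos_pos) auto
    then show False using q by simp
  qed
  then show av: "blinfun_apply ws v = (norm v)\<^sup>2" unfolding a_def N_def by simp
  have up: "blinfun_apply ws y \<le> norm v * norm y" for y
  proof (cases "y = 0")
    case True then show ?thesis by simp
  next
    case False
    define c where "c = norm v / norm y"
    have cp: "0 < c" using False v0 unfolding c_def by simp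
    have "norm (c *\<^sub>R y) = norm v" using False cp unfolding c_def by simp
    then have "(1/2) * (norm v)\<^sup>2 + (c * blinfun_apply ws y - (norm v)\<^sup>2) \<le> (1/2) * (norm v)\<^sup>2"
      using H[of "c *\<^sub>R y"] av by (simp add: blinfun.diff_right blinfun.scaleR_right)
    then have "c * blinfun_apply ws y \<le> (norm v)\<^sup>2" by simp
    then have "c * blinfun_apply ws y \<le> c * (norm v * norm y)"
      using False unfolding c_def by (simp add: power2_eq_square)
    then show ?thesis using cp by simp
  qed
  show ab: "\<bar>blinfun_apply ws y\<bar> \<le> norm v * norm y" for y
    using up[of y] up[of "- y"] by (simp add: blinfun.minus_right)
  show "norm ws = norm v"
  proof (rule antisym)
    show "norm ws \<le> norm v" by (rule norm_blinfun_bound) (use ab in auto)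
    have "(norm v)\<^sup>2 \<le> norm ws * norm v" using av norm_blinfun[of ws v] by simp
    then show "norm v \<le> norm ws" using v0 by (simp add: power2_eq_square)
  qed
qed

lemma sublin_norm: "sublin (norm :: 'a::real_normed_vector \<Rightarrow> real)"
  unfolding sublin_def by (auto simp: norm_triangle_ineq)

lemma J0_exists:
  fixes v :: "'a::real_normed_vector"
  shows "\<exists>ws. ws \<in> J_eps 0 v"
proof -
  obtain r where r: "sublin r" "r \<le> norm" "r (- v) \<le> - norm v"
    using shift_sublin[OF sublin_norm] by blast
  obtain f where f: "linear f" "\<And>x. f x \<le> r x" using hahn_banach_sublin[OF r(1)] by blast
  have fle: "f x \<le> norm x" for x using f(2)[of x] le_funD[OF r(2), of x] by simp
  have fneg: "f (- x) = - f x" for x using f(1) by (simp add: linear_neg)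
  have fab: "\<bar>f x\<bar> \<le> norm x" for x using fle[of x] fle[of "- x"] fneg[of x] by simp
  have fv: "f v = norm v" using fle[of v] f(2)[of "- v"] r(3) fneg[of v] by simp
  define nv where "nv = norm v"
  have nv0: "0 \<le> nv" unfolding nv_def by simp
  have bl: "bounded_linear (\<lambda>x. nv * f x)"
  proof (rule bounded_linear_intro[where K=nv])
    show "nv * f (x + y) = nv * f x + nv * f y" for x y using f(1) by (simp add: linear_add algebra_simps)
    show "nv * f (c *\<^sub>R x) = c *\<^sub>R (nv * f x)" for c x using f(1) by (simp add: linear_scale)
    show "norm (nv * f x) \<le> norm x * nv" for x
      using fab[of x] nv0 by (simp add: abs_mult mult_left_mono mult.commute)
  qed
  define ws where "ws = Blinfun (\<lambda>x. nv * f x)"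
  have wsa: "blinfun_apply ws x = nv * f x" for x unfolding ws_def using bl by (simp add: bounded_linear_Blinfun_apply)
  have "ws \<in> J_eps 0 v"
    unfolding J_eps_def
  proof (intro CollectI allI)
    fix y
    have lin: "f (y - v) = f y - f v" using f(1) by (simp add: linear_diff)
    have "nv * f y \<le> nv * norm y" using fle[of y] nv0 by (simp add: mult_left_mono)
    moreover have "0 \<le> (nv - norm y)\<^sup>2" by simp
    ultimately show "(1/2) * (norm v)\<^sup>2 + blinfun_apply ws (y - v) \<le> (1/2) * (norm y)\<^sup>2 + 0"
      unfolding wsa lin fv nv_def[symmetric] by (simp add: power2_eq_square algebra_simps)
  qed
  then show ?thesis by blast
qed

lemma dmap_in:
  fixes v :: "'a::real_normed_vector"
  assumes sc1: "strictly_convex_space TYPE('a \<Rightarrow>\<^sub>L real)" and v0: "v \<noteq> 0"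
  shows "duality_map v \<in> J_eps 0 v"
  unfolding duality_map_def
proof (rule theI')
  obtain ws where "ws \<in> J_eps 0 v" using J0_exists by blast
  moreover have "w1 = w2" if w1: "w1 \<in> J_eps 0 v" and w2: "w2 \<in> J_eps 0 v" for w1 w2
  proof (rule ccontr)
    assume ne: "w1 \<noteq> w2"
    define nv where "nv = norm v"
    have nvp: "0 < nv" using v0 unfolding nv_def by simp
    define a where "a = (1 / nv) *\<^sub>R w1"
    define b where "b = (1 / nv) *\<^sub>R w2"
    have na: "norm a = 1" unfolding a_def using J0_props(3)[OF w1 v0] nvp nv_def by simp
    have nb: "norm b = 1" unfolding b_def using J0_props(3)[OF w2 v0] nvp nv_def by simp
    have "a \<noteq> b" using ne nvp unfolding a_def b_def by simp
    then have lt: "norm ((1/2) *\<^sub>R (a + b)) < 1"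
      using sc1 na nb unfolding strictly_convex_space_def by blast
    have av: "blinfun_apply a v = nv"
      unfolding a_def using J0_props(1)[OF w1 v0] nvp by (simp add: nv_def power2_eq_square)
    have bv: "blinfun_apply b v = nv"
      unfolding b_def using J0_props(1)[OF w2 v0] nvp by (simp add: nv_def power2_eq_square)
    have "blinfun_apply ((1/2) *\<^sub>R (a + b)) v = nv"
      by (simp add: av bv)
    also have "\<dots> \<le> norm ((1/2) *\<^sub>R (a + b)) * nv"
      using norm_blinfun[of "(1/2) *\<^sub>R (a + b)" v] av bv nvp unfolding nv_def by simp
    finally show False using lt nvp av bv by simp
  qed
  ultimately show "\<exists>!ws. ws \<in> J_eps 0 v" by blast
qed




lemma est:
  fixes z d :: "'a::real_normed_vector \<Rightarrow>\<^sub>L real" and v w :: 'a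
  assumes J: "z \<in> J_eps t w" and db: "\<And>y. \<bar>blinfun_apply d y\<bar> \<le> norm v * norm y"
    and dv: "blinfun_apply d v = (norm v)\<^sup>2"
  defines "e \<equiv> norm (z - d)" and "nv \<equiv> norm v"
  shows "\<bar>norm w - nv\<bar> \<le> e + sqrt (4 * e * nv + 2 * t + e\<^sup>2)"
    and "(1/2) * nv\<^sup>2 - e * nv - t + (1/2) * (norm w)\<^sup>2 - e * norm w \<le> blinfun_apply d w"
    and "blinfun_apply d w \<le> nv * norm w"
proof -
  have H: "(1/2) * (norm w)\<^sup>2 + blinfun_apply z (v - w) \<le> (1/2) * nv\<^sup>2 + t"
    using J unfolding J_eps_def nv_def by auto
  have e0: "0 \<le> e" unfolding e_def by simp
  have zd: "\<bar>blinfun_apply z x - blinfun_apply d x\<bar> \<le> e * norm x" for x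
    using norm_blinfun[of "z - d" x] unfolding e_def by (simp add: blinfun.diff_left mult.commute)
  have zv: "nv\<^sup>2 - e * nv \<le> blinfun_apply z v" using zd[of v] dv unfolding nv_def by linarith
  have dw: "blinfun_apply d w \<le> nv * norm w" using db[of w] unfolding nv_def by linarith
  then show "blinfun_apply d w \<le> nv * norm w" .
  have zw: "blinfun_apply z w \<le> nv * norm w + e * norm w" using zd[of w] dw by linarith
  have zvw: "blinfun_apply z (v - w) = blinfun_apply z v - blinfun_apply z w"
    by (simp add: blinfun.diff_right)
  define W where "W = norm w"
  have W0: "0 \<le> W" unfolding W_def by simp
  have "W * W \<le> nv * nv + 2 * t - 2 * (nv * nv - e * nv) + 2 * (nv + e) * W"
    using H zv zw unfolding zvw W_def[symmetric] by (simp add: power2_eq_square algebra_simps)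
  moreover have "(W - nv - e)\<^sup>2 = W * W - 2 * W * (nv + e) + (nv + e) * (nv + e)"
    by (simp add: power2_eq_square algebra_simps)
  ultimately have sq: "(W - nv - e)\<^sup>2 \<le> 4 * e * nv + 2 * t + e\<^sup>2"
    by (simp add: power2_eq_square algebra_simps)
  have "\<bar>W - nv - e\<bar> \<le> sqrt (4 * e * nv + 2 * t + e\<^sup>2)"
    using real_sqrt_le_mono[OF sq] by simp
  then show "\<bar>norm w - nv\<bar> \<le> e + sqrt (4 * e * nv + 2 * t + e\<^sup>2)"
    unfolding W_def[symmetric] using e0 by linarith
  have "blinfun_apply z v - (1/2) * nv\<^sup>2 - t + (1/2) * W\<^sup>2 \<le> blinfun_apply z w"
    using H unfolding zvw W_def[symmetric] by linarith
  then show "(1/2) * nv\<^sup>2 - e * nv - t + (1/2) * (norm w)\<^sup>2 - e * norm w \<le> blinfun_apply d w"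
    using zv zd[of w] unfolding W_def[symmetric] by (simp add: power2_eq_square algebra_simps)
qed




theorem lemma4p1:
  fixes v :: "'a::banach"
    and I :: "'i set" and le :: "'i \<Rightarrow> 'i \<Rightarrow> bool"
    and t :: "'i \<Rightarrow> real" and w :: "'i \<Rightarrow> 'a" and z :: "'i \<Rightarrow> ('a \<Rightarrow>\<^sub>L real)"
  assumes "strictly_convex_space TYPE('a \<Rightarrow>\<^sub>L real)"
    and "strictly_convex_space TYPE(('a \<Rightarrow>\<^sub>L real) \<Rightarrow>\<^sub>L real)"
    and "w_Kadec_Klee TYPE('a)"
    and "wstar_Kadec_Klee TYPE('a)"
    and "v \<noteq> 0"
    and "directed I le"
    and "\<forall>i\<in>I. t i > 0"
    and "net_lim I le t 0"
    and "\<forall>i\<in>I. z i \<in> J_eps (t i) (w i)"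
    and "net_lim I le (\<lambda>i. norm (z i - duality_map v)) 0"
  shows "\<exists>(K :: ('i \<times> 'a set) set) leK \<phi>. subnet_map K leK \<phi> I le \<and> net_lim K leK (\<lambda>k. w (\<phi> k)) v"
proof -
  note sc1 = assms(1) and sc2 = assms(2) and wkk = assms(3) and v0 = assms(5) and dir = assms(6)
  define nv where "nv = norm v"
  define d where "d = duality_map v"
  have dJ: "d \<in> J_eps 0 v" unfolding d_def by (rule dmap_in[OF sc1 v0])
  have dv: "blinfun_apply d v = (norm v)\<^sup>2" and db: "\<And>y. \<bar>blinfun_apply d y\<bar> \<le> norm v * norm y"
    and dn: "norm d = norm v"
    using J0_props[OF dJ v0] by auto
  define F where "F = (INF i0\<in>I. principal {i\<in>I. le i0 i})"
  have evF: "eventually P F \<longleftrightarrow> (\<exists>i0\<in>I. \<forall>i\<in>I. le i0 i \<longrightarrow> P i)" for P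
    unfolding F_def by (rule eventually_tail[OF dir])
  have dirrefl: "\<And>i. i \<in> I \<Longrightarrow> le i i" using dir unfolding directed_def by blast
  obtain i00 where i00: "i00 \<in> I" using dir unfolding directed_def by blast
  have Fbot: "F \<noteq> bot"
  proof
    assume "F = bot"
    then have "eventually (\<lambda>_. False) F" by simp
    then obtain j where "j \<in> I" "\<forall>i\<in>I. le j i \<longrightarrow> False" unfolding evF by blast
    then show False using dirrefl by blast
  qed
  have evI: "eventually (\<lambda>i. i \<in> I) F"
    unfolding evF using i00 by blast
  have t0: "(t \<longlongrightarrow> 0) F" using assms(8) unfolding net_lim_tail[OF dir] F_def .
  define e where "e i = norm (z i - d)" for i
  have e0: "(e \<longlongrightarrow> 0) F" using assms(10) unfolding net_lim_tail[OF dir] F_def e_def d_def .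
  have est_i: "\<bar>norm (w i) - nv\<bar> \<le> e i + sqrt (4 * e i * nv + 2 * t i + (e i)\<^sup>2)"
    "(1/2) * nv\<^sup>2 - e i * nv - t i + (1/2) * (norm (w i))\<^sup>2 - e i * norm (w i) \<le> blinfun_apply d (w i)"
    "blinfun_apply d (w i) \<le> nv * norm (w i)" if "i \<in> I" for i
  proof -
    have zi: "z i \<in> J_eps (t i) (w i)" using bspec[OF assms(9) that] .
    note E = est[OF zi db dv]
    show "\<bar>norm (w i) - nv\<bar> \<le> e i + sqrt (4 * e i * nv + 2 * t i + (e i)\<^sup>2)"
      using E(1) unfolding e_def nv_def .
    show "(1/2) * nv\<^sup>2 - e i * nv - t i + (1/2) * (norm (w i))\<^sup>2 - e i * norm (w i) \<le> blinfun_apply d (w i)"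
      using E(2) unfolding e_def nv_def .
    show "blinfun_apply d (w i) \<le> nv * norm (w i)"
      using E(3) unfolding e_def nv_def .
  qed
  have g1: "((\<lambda>i. e i + sqrt (4 * e i * nv + 2 * t i + (e i)\<^sup>2)) \<longlongrightarrow> 0 + sqrt (4 * 0 * nv + 2 * 0 + 0\<^sup>2)) F"
    by (intro tendsto_intros e0 t0)
  have "((\<lambda>i. norm (w i) - nv) \<longlongrightarrow> 0) F"
  proof (rule Lim_null_comparison)
    show "eventually (\<lambda>i. norm (norm (w i) - nv) \<le> e i + sqrt (4 * e i * nv + 2 * t i + (e i)\<^sup>2)) F"
      using evI by eventually_elim (use est_i in auto)
    show "((\<lambda>i. e i + sqrt (4 * e i * nv + 2 * t i + (e i)\<^sup>2)) \<longlongrightarrow> 0) F" using g1 by simp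
  qed
  then have Fw: "((\<lambda>i. norm (w i)) \<longlongrightarrow> norm v) F" unfolding nv_def by (rule LIM_zero_cancel)
  have Fd: "((\<lambda>i. blinfun_apply d (w i)) \<longlongrightarrow> (norm v)\<^sup>2) F"
  proof (rule tendsto_sandwich)
    show "eventually (\<lambda>i. (1/2) * nv\<^sup>2 - e i * nv - t i + (1/2) * (norm (w i))\<^sup>2 - e i * norm (w i)
        \<le> blinfun_apply d (w i)) F"
      using evI by eventually_elim (use est_i in auto)
    show "eventually (\<lambda>i. blinfun_apply d (w i) \<le> nv * norm (w i)) F"
      using evI by eventually_elim (use est_i in auto)
    have "((\<lambda>i. (1/2) * nv\<^sup>2 - e i * nv - t i + (1/2) * (norm (w i))\<^sup>2 - e i * norm (w i))
        \<longlongrightarrow> (1/2) * nv\<^sup>2 - 0 * nv - 0 + (1/2) * (norm v)\<^sup>2 - 0 * norm v) F"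
      by (intro tendsto_intros e0 t0 Fw)
    then show "((\<lambda>i. (1/2) * nv\<^sup>2 - e i * nv - t i + (1/2) * (norm (w i))\<^sup>2 - e i * norm (w i))
        \<longlongrightarrow> (norm v)\<^sup>2) F" unfolding nv_def by simp
    have "((\<lambda>i. nv * norm (w i)) \<longlongrightarrow> nv * norm v) F" by (intro tendsto_intros Fw)
    then show "((\<lambda>i. nv * norm (w i)) \<longlongrightarrow> (norm v)\<^sup>2) F" unfolding nv_def by (simp add: power2_eq_square)
  qed
  have weak: "((\<lambda>i. blinfun_apply f (w i)) \<longlongrightarrow> blinfun_apply f v) F" for f :: "'a \<Rightarrow>\<^sub>L real"
  proof (rule ccontr)
    assume "\<not> ?thesis"
    then obtain \<epsilon> :: real where eps: "0 < \<epsilon>"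
      and ne: "\<not> eventually (\<lambda>i. dist (blinfun_apply f (w i)) (blinfun_apply f v) < \<epsilon>) F"
      unfolding tendsto_iff by blast
    then have "frequently (\<lambda>i. \<not> dist (blinfun_apply f (w i)) (blinfun_apply f v) < \<epsilon>) F"
      by (simp add: not_eventually)
    then have "frequently (\<lambda>i. blinfun_apply f (w i) \<ge> blinfun_apply f v + \<epsilon>
        \<or> blinfun_apply (- f) (w i) \<ge> blinfun_apply (- f) v + \<epsilon>) F"
      by (rule frequently_elim1) (auto simp: dist_real_def)
    then have "frequently (\<lambda>i. blinfun_apply f (w i) \<ge> blinfun_apply f v + \<epsilon>) F
        \<or> frequently (\<lambda>i. blinfun_apply (- f) (w i) \<ge> blinfun_apply (- f) v + \<epsilon>) F"
      by (simp only: frequently_disj_iff)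
    then show False
      using core[OF sc2 v0 dv dn Fw Fd eps] by blast
  qed
  have kk: "\<And>(F' :: 'a filter) x. (\<forall>f :: 'a \<Rightarrow>\<^sub>L real. ((\<lambda>y. blinfun_apply f y) \<longlongrightarrow> blinfun_apply f x) F')
        \<and> ((\<lambda>y. norm y) \<longlongrightarrow> norm x) F' \<Longrightarrow> ((\<lambda>y. y) \<longlongrightarrow> x) F'"
    using wkk unfolding w_Kadec_Klee_def by blast
  have "((\<lambda>y. y) \<longlongrightarrow> v) (filtermap w F)"
  proof (rule kk, intro conjI allI)
    fix f :: "'a \<Rightarrow>\<^sub>L real"
    show "((\<lambda>y. blinfun_apply f y) \<longlongrightarrow> blinfun_apply f v) (filtermap w F)"
      unfolding filterlim_filtermap using weak[of f] .
    show "((\<lambda>y. norm y) \<longlongrightarrow> norm v) (filtermap w F)"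
      unfolding filterlim_filtermap using Fw .
  qed
  then have "(w \<longlongrightarrow> v) F" unfolding filterlim_filtermap .
  then have nl: "net_lim I le w v" unfolding net_lim_tail[OF dir] F_def .
  define K :: "('i \<times> 'a set) set" where "K = (\<lambda>i. (i, {})) ` I"
  define leK :: "('i \<times> 'a set) \<Rightarrow> ('i \<times> 'a set) \<Rightarrow> bool" where "leK a b = le (fst a) (fst b)" for a b
  have dI: "I \<noteq> {}" "\<And>i. i \<in> I \<Longrightarrow> le i i"
    "\<And>i j k. i \<in> I \<Longrightarrow> j \<in> I \<Longrightarrow> k \<in> I \<Longrightarrow> le i j \<Longrightarrow> le j k \<Longrightarrow> le i k"
    "\<And>i j. i \<in> I \<Longrightarrow> j \<in> I \<Longrightarrow> \<exists>k\<in>I. le i k \<and> le j k"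
    using dir unfolding directed_def by blast+
  have Kfst: "fst a \<in> I" if "a \<in> K" for a using that unfolding K_def by auto
  have dK: "directed K leK"
    unfolding directed_def
  proof (intro conjI ballI impI)
    show "K \<noteq> {}" using dI(1) unfolding K_def by simp
    fix a assume "a \<in> K" then show "leK a a" using dI(2) Kfst unfolding leK_def by blast
  next
    fix a b c assume "a \<in> K" "b \<in> K" "c \<in> K" "leK a b \<and> leK b c"
    then show "leK a c" using dI(3)[of "fst a" "fst b" "fst c"] Kfst unfolding leK_def by blast
  next
    fix a b assume ab: "a \<in> K" "b \<in> K"
    then obtain k where k: "k \<in> I" "le (fst a) k" "le (fst b) k" using dI(4) Kfst by blast
    show "\<exists>c\<in>K. leK a c \<and> leK b c"
      using k unfolding K_def leK_def by (intro bexI[of _ "(k, {})"]) auto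
  qed
  have sm: "subnet_map K leK fst I le"
    unfolding subnet_map_def
  proof (intro conjI ballI)
    show "directed K leK" by (rule dK)
    show "fst ` K \<subseteq> I" unfolding K_def by auto
    fix i0 assume "i0 \<in> I"
    then show "\<exists>k0\<in>K. \<forall>k\<in>K. leK k0 k \<longrightarrow> le i0 (fst k)"
      unfolding K_def leK_def by (intro bexI[of _ "(i0, {})"]) auto
  qed
  have "net_lim K leK (\<lambda>k. w (fst k)) v"
    unfolding net_lim_def
  proof (intro allI impI)
    fix U :: "'a set" assume "open U \<and> v \<in> U"
    then obtain i0 where "i0 \<in> I" "\<forall>i\<in>I. le i0 i \<longrightarrow> w i \<in> U" using nl unfolding net_lim_def by blast
    then show "\<exists>k0\<in>K. \<forall>k\<in>K. leK k0 k \<longrightarrow> w (fst k) \<in> U"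
      unfolding K_def leK_def by (intro bexI[of _ "(i0, {})"]) auto
  qed
  then show ?thesis using sm by blast
qed


end
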